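(* Let $M\in\mathbb{N}$ and let $f$ be a meromorphic function. Then $$\min_{0\le t\le M}\nu^0_{\mathcal{A}_{q^{M-t}}\mathcal{D}_q^tf}(x)=\min_{0\le t\le M}\nu^0_{\eta_q^{M-2t}f}(x)$$ for all $x\in\mathbb{C}$ with $|x|>\mathcal{R}(M,q)$.
   Context: Fix $q\in\mathbb{C}$ with $0<|q|<1$. Every $x\in\mathbb{C}$ is written uniquely as $x=\frac{z+z^{-1}}{2}$ with $|z|\ge 1$ (when $|z|=1$, $z=x+i\sqrt{1-x^2}$). $(\eta_q f)(x)=f\big(\tfrac{q^{1/2}z+q^{-1/2}z^{-1}}{2}\big)$, $(\eta_q^{-1}f)(x)=f\big(\tfrac{q^{-1/2}z+q^{1/2}z^{-1}}{2}\big)$, $\eta_q^0f=f$, $\eta_q^{\pm k}$ the $k$-fold compositions; $(\eta_{q^{\pm k}}f)(x)=f\big(\tfrac{q^{\pm k/2}z+q^{\mp k/2}z^{-1}}{2}\big)$. $\mathcal{R}(M,q)>0$ is a constant such that for $|x|>\mathcal{R}(M,q)$ one has $\eta_q^{\pm k}f=\eta_{q^{\pm k}}f$ for $0\le k\le M$ and the shifts compose additively. Askey-Wilson operator $(\mathcal{D}_qf)(x)=\frac{(\eta_qf)(x)-(\eta_q^{-1}f)(x)}{\eta_qx-\eta_q^{-1}x}$ ($x\ne\pm1$; limit at $\pm1$), $\mathcal{D}_q^0f=f$, $\mathcal{D}_q^k=\mathcal{D}_q\circ\mathcal{D}_q^{k-1}$; $(\mathcal{A}_{q^k}f)(x)=\frac{(\eta_{q^k}f)(x)+(\eta_{q^{-k}}f)(x)}{2}$,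 $\mathcal{A}_{q^0}f=f$. $\nu^0_g(x)\ge0$ denotes the order of zero of $g$ at $x$ (zero if $g(x)\ne0$). *)

theory Defs
  imports "HOL-Complex_Analysis.Complex_Analysis"
begin

definition zpar :: "complex \<Rightarrow> complex" where
  "zpar x = (THE z. x = (z + inverse z) / 2 \<and> 1 \<le> norm z \<and>
                    (norm z = 1 \<longrightarrow> z = x + \<i> * csqrt (1 - x\<^sup>2)))"

definition shiftpt :: "complex \<Rightarrow> complex \<Rightarrow> complex" where
  "shiftpt c x = (c * zpar x + inverse (c * zpar x)) / 2"

definition eta :: "complex \<Rightarrow> (complex \<Rightarrow> complex) \<Rightarrow> complex \<Rightarrow> complex" where
  "eta q f = (\<lambda>x. f (shiftpt (csqrt q) x))"

definition eta_inv :: "complex \<Rightarrow> (complex \<Rightarrow> complex) \<Rightarrow> complex \<Rightarrow> complex" where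
  "eta_inv q f = (\<lambda>x. f (shiftpt (inverse (csqrt q)) x))"

definition eta_iter :: "complex \<Rightarrow> int \<Rightarrow> (complex \<Rightarrow> complex) \<Rightarrow> complex \<Rightarrow> complex" where
  "eta_iter q k f = (if 0 \<le> k then (eta q ^^ nat k) f else (eta_inv q ^^ nat (- k)) f)"

definition eta_pow :: "complex \<Rightarrow> int \<Rightarrow> (complex \<Rightarrow> complex) \<Rightarrow> complex \<Rightarrow> complex" where
  "eta_pow q k f = (\<lambda>x. f (shiftpt (csqrt q powi k) x))"

definition AW_D :: "complex \<Rightarrow> (complex \<Rightarrow> complex) \<Rightarrow> complex \<Rightarrow> complex" where
  "AW_D q f = (\<lambda>x. let d = (\<lambda>y. (eta q f y - eta_inv q f y) / (eta q id y - eta_inv q id y))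
                  in if x = 1 \<or> x = -1 then Lim (at x) d else d x)"

definition AW_D_pow :: "complex \<Rightarrow> nat \<Rightarrow> (complex \<Rightarrow> complex) \<Rightarrow> complex \<Rightarrow> complex" where
  "AW_D_pow q k f = (AW_D q ^^ k) f"

definition AW_A :: "complex \<Rightarrow> nat \<Rightarrow> (complex \<Rightarrow> complex) \<Rightarrow> complex \<Rightarrow> complex" where
  "AW_A q k f = (if k = 0 then f
                 else (\<lambda>x. (eta_pow q (int k) f x + eta_pow q (- int k) f x) / 2))"

text \<open>Order of zero nu^0_g(x) \<ge> 0: 0 if g does not vanish at x (in particular at poles),
  infinity if g vanishes identically near x.\<close>
definition nu0 :: "(complex \<Rightarrow> complex) \<Rightarrow> complex \<Rightarrow> enat" where
  "nu0 g x = (if eventually (\<lambda>y. g y = 0) (at x) then \<infinity> else enat (nat (zorder g x)))"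

end

theory Submission
  imports Defs
begin


lemma nu0_cong:
  assumes "eventually (\<lambda>y. g y = h y) (at p)"
  shows "nu0 g p = nu0 h p"
proof -
  have "eventually (\<lambda>y. g y = 0) (at p) \<longleftrightarrow> eventually (\<lambda>y. h y = 0) (at p)"
    by (rule eventually_subst) (use assms in \<open>auto elim: eventually_mono\<close>)
  moreover have "zorder g p = zorder h p" by (rule zorder_cong[OF assms refl])
  ultimately show ?thesis unfolding nu0_def by simp
qed

definition ge_ord :: "nat \<Rightarrow> (complex \<Rightarrow> complex) \<Rightarrow> complex \<Rightarrow> bool" where
  "ge_ord n g p \<longleftrightarrow> g meromorphic_on {p} \<and> ((\<forall>\<^sub>F y in at p. g y = 0) \<or> int n \<le> zorder g p)"

lemma nu0_ge_iff:
  assumes "g meromorphic_on {p}" "n \<ge> 1"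
  shows "enat n \<le> nu0 g p \<longleftrightarrow> ge_ord n g p"
  using assms unfolding nu0_def ge_ord_def by auto

lemma ge_ord_cong:
  assumes "ge_ord n g p" "eventually (\<lambda>y. g y = h y) (at p)"
  shows "ge_ord n h p"
proof -
  have "h meromorphic_on {p}"
    using assms unfolding ge_ord_def
    by (subst meromorphic_on_cong[where g=g and B="{p}"]) (auto elim: eventually_mono)
  moreover have "eventually (\<lambda>y. g y = 0) (at p) \<longleftrightarrow> eventually (\<lambda>y. h y = 0) (at p)"
    by (rule eventually_subst) (use assms in \<open>auto elim: eventually_mono\<close>)
  moreover have "zorder g p = zorder h p" by (rule zorder_cong[OF assms(2) refl])
  ultimately show ?thesis using assms(1) unfolding ge_ord_def by simp
qed

lemma ge_ord_zero: "ge_ord n (\<lambda>_. 0) p"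
  unfolding ge_ord_def by auto

lemma ge_ord_add:
  assumes f: "ge_ord n f p" and g: "ge_ord n g p"
  shows "ge_ord n (\<lambda>y. f y + g y) p"
proof (cases "eventually (\<lambda>y. f y = 0) (at p)")
  case True
  show ?thesis by (rule ge_ord_cong[OF g]) (use True in \<open>auto elim: eventually_mono\<close>)
next
  case F: False
  show ?thesis
  proof (cases "eventually (\<lambda>y. g y = 0) (at p)")
    case True
    show ?thesis by (rule ge_ord_cong[OF f]) (use True in \<open>auto elim: eventually_mono\<close>)
  next
    case G: False
    have m: "(\<lambda>y. f y + g y) meromorphic_on {p}"
      using f g unfolding ge_ord_def by (auto intro: meromorphic_intros)
    show ?thesis
    proof (cases "eventually (\<lambda>y. f y + g y = 0) (at p)")
      case True thus ?thesis using m unfolding ge_ord_def by auto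
    next
      case False
      have "int n \<le> zorder (\<lambda>y. f y + g y) p"
        apply (rule zorder_add_ge)
        using f g F G False unfolding ge_ord_def by (auto simp: not_eventually)
      thus ?thesis using m unfolding ge_ord_def by auto
    qed
  qed
qed

lemma ge_ord_mult:
  assumes a: "a analytic_on {p}" and g: "ge_ord n g p"
  shows "ge_ord n (\<lambda>y. a y * g y) p"
proof -
  have am: "a meromorphic_on {p}" using a by (rule analytic_on_imp_meromorphic_on)
  have m: "(\<lambda>y. a y * g y) meromorphic_on {p}"
    using g am unfolding ge_ord_def by (auto intro: meromorphic_intros)
  show ?thesis
  proof (cases "eventually (\<lambda>y. a y = 0) (at p) \<or> eventually (\<lambda>y. g y = 0) (at p)")
    case True
    hence "eventually (\<lambda>y. a y * g y = 0) (at p)" by (auto elim: eventually_mono)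
    thus ?thesis using m unfolding ge_ord_def by auto
  next
    case False
    have "zorder (\<lambda>y. a y * g y) p = zorder a p + zorder g p"
      by (rule zorder_mult) (use am g False in \<open>auto simp: ge_ord_def not_eventually\<close>)
    moreover have "zorder a p \<ge> 0"
      by (rule zorder_ge_0) (use a False in \<open>auto simp: not_eventually\<close>)
    ultimately show ?thesis using m g False unfolding ge_ord_def by auto
  qed
qed

lemma ge_ord_sum:
  assumes "finite I" "\<And>i. i \<in> I \<Longrightarrow> a i analytic_on {p}" "\<And>i. i \<in> I \<Longrightarrow> ge_ord n (B i) p"
  shows "ge_ord n (\<lambda>y. \<Sum>i\<in>I. a i y * B i y) p"
  using assms
proof (induction I rule: finite_induct)
  case empty thus ?case by (simp add: ge_ord_zero)
next
  case (insert j I)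
  have "ge_ord n (\<lambda>y. a j y * B j y + (\<Sum>i\<in>I. a i y * B i y)) p"
    by (intro ge_ord_add ge_ord_mult insert) auto
  thus ?case using insert by simp
qed

lemma mero_sum:
  assumes "finite I" "\<And>i. i \<in> I \<Longrightarrow> a i analytic_on {p}" "\<And>i. i \<in> I \<Longrightarrow> B i meromorphic_on {p}"
  shows "(\<lambda>y. \<Sum>i\<in>I. a i y * B i y) meromorphic_on {p}"
  by (rule meromorphic_on_sum) (rule meromorphic_on_mult[OF analytic_on_imp_meromorphic_on]; use assms in auto)

lemma span_nu0:
  assumes I: "finite I" and B: "\<And>i. i \<in> I \<Longrightarrow> B i meromorphic_on {p}"
    and a: "\<And>i. i \<in> I \<Longrightarrow> a i analytic_on {p}"
    and h: "eventually (\<lambda>y. h y = (\<Sum>i\<in>I. a i y * B i y)) (at p)"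
    and k: "\<And>i. i \<in> I \<Longrightarrow> k \<le> nu0 (B i) p"
  shows "k \<le> nu0 h p"
proof -
  have eq: "nu0 h p = nu0 (\<lambda>y. \<Sum>i\<in>I. a i y * B i y) p" by (rule nu0_cong[OF h])
  have ms: "(\<lambda>y. \<Sum>i\<in>I. a i y * B i y) meromorphic_on {p}" by (rule mero_sum[OF I a B])
  show ?thesis
  proof (cases k)
    case infinity
    have "\<forall>i\<in>I. eventually (\<lambda>y. B i y = 0) (at p)"
    proof
      fix i assume "i \<in> I"
      from k[OF this] show "eventually (\<lambda>y. B i y = 0) (at p)"
        unfolding infinity nu0_def by (cases "eventually (\<lambda>y. B i y = 0) (at p)") auto
    qed
    hence "eventually (\<lambda>y. \<forall>i\<in>I. B i y = 0) (at p)"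
      using I by (simp add: eventually_ball_finite)
    hence "eventually (\<lambda>y. h y = 0) (at p)"
      using h by eventually_elim auto
    thus ?thesis unfolding infinity nu0_def by simp
  next
    case (enat n)
    show ?thesis
    proof (cases "n = 0")
      case True thus ?thesis using enat by (simp add: zero_enat_def[symmetric])
    next
      case False
      have "ge_ord n (\<lambda>y. \<Sum>i\<in>I. a i y * B i y) p"
        by (rule ge_ord_sum[OF I a]) (use k B False enat nu0_ge_iff in auto)
      thus ?thesis unfolding eq enat using nu0_ge_iff[OF ms] False by simp
    qed
  qed
qed




definition jw :: "complex \<Rightarrow> complex" where "jw u = (u + inverse u) / 2"

lemma jw_eq_iff:
  assumes "a \<noteq> 0" "b \<noteq> 0"
  shows "jw a = jw b \<longleftrightarrow> a = b \<or> a * b = 1"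
proof -
  have "jw a = jw b \<longleftrightarrow> (a - b) * (a * b - 1) = 0"
  proof -
    have "jw a = jw b \<longleftrightarrow> a + inverse a = b + inverse b"
      unfolding jw_def by (metis divide_cancel_right zero_neq_numeral)
    also have "\<dots> \<longleftrightarrow> (a + inverse a) * (a * b) = (b + inverse b) * (a * b)"
      using assms by simp
    also have "(a + inverse a) * (a * b) = a * a * b + b" using assms by (simp add: field_simps)
    also have "(b + inverse b) * (a * b) = a * b * b + a" using assms by (simp add: field_simps)
    also have "(a * a * b + b = a * b * b + a) \<longleftrightarrow> (a - b) * (a * b - 1) = 0"
      by (simp add: algebra_simps)
    finally show ?thesis .
  qed
  thus ?thesis by auto
qed

definition zP :: "complex \<Rightarrow> complex \<Rightarrow> bool" where
  "zP x z \<longleftrightarrow> x = (z + inverse z) / 2 \<and> 1 \<le> norm z \<and>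
                    (norm z = 1 \<longrightarrow> z = x + \<i> * csqrt (1 - x\<^sup>2))"

lemma zP_unique: assumes "zP x z1" "zP x z2" shows "z1 = z2"
proof -
  have n: "z1 \<noteq> 0" "z2 \<noteq> 0" using assms unfolding zP_def by auto
  have "jw z1 = jw z2" using assms unfolding zP_def jw_def by auto
  hence "z1 = z2 \<or> z1 * z2 = 1" using jw_eq_iff n by auto
  thus ?thesis
  proof
    assume h: "z1 * z2 = 1"
    have "norm z1 * norm z2 = 1" using h by (metis norm_mult norm_one)
    moreover have "norm z1 \<ge> 1" "norm z2 \<ge> 1" using assms unfolding zP_def by auto
    moreover have "norm z1 * 1 \<le> norm z1 * norm z2"
      using calculation by (intro mult_left_mono) auto
    moreover have "1 * norm z2 \<le> norm z1 * norm z2"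
      using calculation by (intro mult_right_mono) auto
    ultimately have n1: "norm z1 = 1" "norm z2 = 1" by auto
    have "z1 = x + \<i> * csqrt (1 - x\<^sup>2)" using assms(1) n1(1) unfolding zP_def by blast
    moreover have "z2 = x + \<i> * csqrt (1 - x\<^sup>2)" using assms(2) n1(2) unfolding zP_def by blast
    ultimately show ?thesis by simp
  qed
qed

lemma zP_exists: "\<exists>z. zP x z"
proof -
  define s where "s = csqrt (1 - x\<^sup>2)"
  have ss: "s * s = 1 - x\<^sup>2" unfolding s_def by (metis power2_csqrt power2_eq_square)
  define v where "v = x + \<i> * s"
  have prod: "v * (x - \<i> * s) = 1" unfolding v_def using ss
    by (simp add: algebra_simps power2_eq_square)
  hence v0: "v \<noteq> 0" by auto
  have iv: "inverse v = x - \<i> * s" using prod by (simp add: inverse_unique)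
  have "v + inverse v = 2 * x" unfolding iv by (simp add: v_def)
  hence jv: "x = (v + inverse v) / 2" by simp
  show ?thesis
  proof (cases "1 \<le> norm v")
    case True
    have "zP x v" unfolding zP_def using jv True v_def s_def by auto
    thus ?thesis by blast
  next
    case False
    have "norm (inverse v) > 1" using False v0
      by (simp add: norm_inverse one_less_inverse)
    moreover have "x = (inverse v + inverse (inverse v)) / 2" using jv by simp
    ultimately have "zP x (inverse v)" unfolding zP_def by auto
    thus ?thesis by blast
  qed
qed

lemma zpar_zP: "zP x (zpar x)"
proof -
  have "zpar x = (THE z. zP x z)" unfolding zpar_def zP_def by simp
  moreover have "\<exists>!z. zP x z" using zP_exists zP_unique by blast
  hence "zP x (THE z. zP x z)" by (rule theI')
  ultimately show ?thesis by simp
qed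

lemma jw_zpar: "jw (zpar x) = x" and norm_zpar: "1 \<le> norm (zpar x)"
  using zpar_zP[of x] unfolding zP_def jw_def by auto

lemma zpar_nz: "zpar x \<noteq> 0" using norm_zpar[of x] by auto

lemma zpar_jw: assumes "1 < norm u" shows "zpar (jw u) = u"
proof -
  have "zP (jw u) u" using assms unfolding zP_def jw_def by auto
  thus ?thesis using zpar_zP zP_unique by blast
qed

lemma shiftpt_jw: "shiftpt c y = jw (c * zpar y)"
  unfolding shiftpt_def jw_def by simp

lemma open_gt1: "open {u::complex. 1 < norm u}"
  by (intro open_Collect_less continuous_intros)

lemma jw_holo: "jw holomorphic_on {u. 1 < norm u}"
  unfolding jw_def by (intro holomorphic_intros) auto

lemma jw_inj: "inj_on jw {u. 1 < norm u}"
proof (rule inj_onI)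
  fix a b assume a: "a \<in> {u. 1 < norm u}" and b: "b \<in> {u. 1 < norm u}" and e: "jw a = jw b"
  have "a \<noteq> 0" "b \<noteq> 0" using a b by auto
  hence "a = b \<or> a * b = 1" using jw_eq_iff[of a b] e by auto
  moreover have "norm (a * b) > 1" using a b
    by (simp add: norm_mult less_1_mult)
  ultimately show "a = b" by auto
qed

lemma open_U: "open (jw ` {u. 1 < norm u})"
  by (rule open_mapping_thm3[OF jw_holo open_gt1 jw_inj])

lemma zpar_holo: "zpar holomorphic_on (jw ` {u. 1 < norm u})"
proof -
  obtain g where g: "g holomorphic_on (jw ` {u. 1 < norm u})"
     "\<And>z. z \<in> {u. 1 < norm u} \<Longrightarrow> g (jw z) = z"
    using holomorphic_has_inverse[OF jw_holo open_gt1 jw_inj] by metis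
  show ?thesis
    by (rule holomorphic_transform[OF g(1)]) (auto simp: g(2) zpar_jw)
qed

lemma zpar_analytic:
  assumes "1 < norm (zpar x)"
  shows "zpar analytic_on {x}"
proof -
  have "x \<in> jw ` {u. 1 < norm u}" using assms jw_zpar by (metis image_eqI mem_Collect_eq)
  moreover have "zpar analytic_on (jw ` {u. 1 < norm u})"
    using zpar_holo open_U by (simp add: analytic_on_open)
  ultimately show ?thesis using analytic_on_subset by blast
qed




lemma sq_ne1: "0 \<le> (a::real) \<Longrightarrow> a < 1 \<Longrightarrow> a * a \<noteq> 1"
  using mult_strict_mono[of a 1 a 1] by auto

lemma sq_ne1': "1 < (a::real) \<Longrightarrow> a * a \<noteq> 1"
  using less_1_mult[of a a] by auto

definition den :: "complex \<Rightarrow> complex \<Rightarrow> complex" where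
  "den c v = jw (c * v) - jw (inverse c * v)"

lemma den_nz:
  assumes c: "c \<noteq> 0" "norm c < 1" and v: "1 < norm v"
  shows "den c v \<noteq> 0"
proof
  assume "den c v = 0"
  hence "jw (c * v) = jw (inverse c * v)" unfolding den_def by simp
  moreover have "v \<noteq> 0" using v by auto
  ultimately have "c * v = inverse c * v \<or> (c * v) * (inverse c * v) = 1"
    using jw_eq_iff c by auto
  moreover have "c * v \<noteq> inverse c * v"
  proof
    assume "c * v = inverse c * v"
    hence "c * c = 1" using \<open>v \<noteq> 0\<close> c by (simp add: field_simps)
    hence "norm c * norm c = 1" by (metis norm_mult norm_one)
    thus False using c sq_ne1[of "norm c"] by simp
  qed
  moreover have "(c * v) * (inverse c * v) = v * v" using c by (simp add: field_simps)
  ultimately have "v * v = 1" by simp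
  hence "norm v * norm v = 1" by (metis norm_mult norm_one)
  thus False using v sq_ne1'[of "norm v"] by simp
qed

locale L =
  fixes q :: complex and M :: nat and R :: real and f :: "complex \<Rightarrow> complex"
  assumes q: "0 < norm q" "norm q < 1"
    and R_iter: "\<forall>g x k. R < norm x \<and> k \<le> M \<longrightarrow>
                   eta_iter q (int k) g x = eta_pow q (int k) g x \<and>
                   eta_iter q (- int k) g x = eta_pow q (- int k) g x"
    and R_add: "\<forall>g x a b. R < norm x \<and> \<bar>a\<bar> \<le> int M \<and> \<bar>b\<bar> \<le> int M \<and> \<bar>a + b\<bar> \<le> int M \<longrightarrow>
                   eta_pow q a (eta_pow q b g) x = eta_pow q (a + b) g x"
    and f: "f meromorphic_on UNIV"
    and M1: "1 \<le> M"
begin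

definition "c = csqrt q"

lemma c_nz: "c \<noteq> 0" and c_lt1: "norm c < 1"
  using q unfolding c_def by (auto simp: real_sqrt_lt_1_iff)

lemma eta_pow_jw: "eta_pow q m g y = g (jw (c powi m * zpar y))"
  unfolding eta_pow_def shiftpt_jw c_def ..

lemma region:
  assumes y: "R < norm y"
  shows "1 < norm c ^ (M - 1) * norm (zpar y)"
proof (rule ccontr)
  assume A: "\<not> ?thesis"
  define u where "u = zpar y"
  define v where "v = c ^ M * u"
  have u0: "u \<noteq> 0" unfolding u_def by (rule zpar_nz)
  have cM: "c ^ M = c * c ^ (M - 1)" using M1 by (metis Suc_diff_1 One_nat_def Suc_le_eq power_Suc)
  have nv: "norm v \<le> norm c" unfolding v_def cM using A c_lt1 unfolding u_def
    by (simp add: norm_mult norm_power mult.assoc mult_left_le)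
  hence nv1: "norm v < 1" using c_lt1 by simp
  have v0: "v \<noteq> 0" unfolding v_def using u0 c_nz by simp
  have "eta_pow q (int M) (eta_pow q (- int M) id) y = eta_pow q (int M + - int M) id y"
    using R_add y by auto
  hence E: "jw (c powi (- int M) * zpar (jw (c powi (int M) * zpar y))) = jw (c powi 0 * zpar y)"
    unfolding eta_pow_jw by simp
  have "jw v = jw (inverse v)" using jw_eq_iff[of v "inverse v"] v0 by simp
  moreover have "1 < norm (inverse v)" using nv1 v0 by (simp add: norm_inverse one_less_inverse)
  ultimately have zv: "zpar (jw v) = inverse v" by (metis zpar_jw)
  have "jw (inverse (c ^ M) * inverse v) = jw u"
    using E zv jw_zpar[of y] unfolding v_def u_def by (simp add: power_int_minus)
  hence "inverse (c ^ M) * inverse v = u \<or> (inverse (c ^ M) * inverse v) * u = 1"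
    using jw_eq_iff c_nz v0 u0 by simp
  thus False
  proof
    assume "inverse (c ^ M) * inverse v = u"
    hence "v * v = 1" unfolding v_def using c_nz u0 by (simp add: field_simps)
    hence "norm v * norm v = 1" by (metis norm_mult norm_one)
    thus False using nv1 sq_ne1[of "norm v"] by simp
  next
    assume "(inverse (c ^ M) * inverse v) * u = 1"
    hence "c ^ M * c ^ M = 1" unfolding v_def using c_nz u0 by (simp add: field_simps)
    hence "norm c ^ M * norm c ^ M = 1" by (metis norm_mult norm_one norm_power)
    moreover have "norm c ^ M < 1" using c_lt1 M1 by (simp add: power_less_one_iff)
    ultimately show False using sq_ne1[of "norm c ^ M"] by simp
  qed
qed

lemma region2:
  assumes y: "R < norm y" and m: "\<bar>m\<bar> \<le> int M - 1"
  shows "1 < norm (c powi m * zpar y)"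
proof -
  have r: "1 < norm c ^ (M - 1) * norm (zpar y)" by (rule region[OF y])
  have nc: "0 < norm c" "norm c < 1" using c_nz c_lt1 by auto
  have "norm c ^ (M - 1) \<le> 1" using nc by (simp add: power_le_one)
  hence nz1: "1 < norm (zpar y)" using r mult_right_mono[of "norm c ^ (M - 1)" 1 "norm (zpar y)"]
    by simp
  show ?thesis
  proof (cases "0 \<le> m")
    case True
    have "norm c ^ (M - 1) \<le> norm c ^ nat m"
      using m True nc by (intro power_decreasing) auto
    hence "1 < norm c ^ nat m * norm (zpar y)" using r
      by (meson less_le_trans mult_right_mono norm_ge_zero)
    thus ?thesis using True by (simp add: norm_mult norm_power power_int_def)
  next
    case False
    have "1 \<le> inverse (norm c) ^ nat (- m)" using nc
      by (simp add: one_le_power one_le_inverse_iff)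
    hence "1 < inverse (norm c) ^ nat (- m) * norm (zpar y)" using nz1
      using mult_right_mono[of 1 "inverse (norm c) ^ nat (- m)" "norm (zpar y)"] by simp
    thus ?thesis using False by (simp add: norm_mult norm_power power_int_def norm_inverse power_inverse)
  qed
qed

end



locale L2 = L +
  fixes x :: complex
  assumes x: "R < norm x"
begin

definition "H m t = eta_pow q m (AW_D_pow q t f)"
definition "Lt t = AW_A q (M - t) (AW_D_pow q t f)"
definition "Rj j = eta_iter q (int M - 2 * int j) f"

lemma H_Suc:
  assumes v: "1 < norm (c powi m * zpar y)"
  shows "H m (Suc t) y * den c (c powi m * zpar y) = H (m + 1) t y - H (m - 1) t y"
proof -
  define v where "v = c powi m * zpar y"
  define g where "g = AW_D_pow q t f"
  have v1: "1 < norm v" using v unfolding v_def .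
  have v0: "v \<noteq> 0" using v1 by auto
  have j1: "jw 1 = 1" "jw (-1) = -1" unfolding jw_def by simp_all
  have ne1: "jw v \<noteq> 1"
  proof
    assume "jw v = 1" hence "jw v = jw 1" using j1 by simp
    hence "v = 1 \<or> v * 1 = 1" using jw_eq_iff[of v 1] v0 by simp
    thus False using v1 by auto
  qed
  have ne2: "jw v \<noteq> -1"
  proof
    assume "jw v = -1" hence "jw v = jw (-1)" using j1 by simp
    hence "v = -1 \<or> v * -1 = 1" using jw_eq_iff[of v "-1"] v0 by simp
    hence "norm v = 1" by (auto simp: minus_equation_iff[of v])
    thus False using v1 by auto
  qed
  have zj: "zpar (jw v) = v" using zpar_jw[OF v1] .
  have e1: "eta q h (jw v) = h (jw (c * v))" for h
    unfolding eta_def shiftpt_jw zj c_def ..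
  have e2: "eta_inv q h (jw v) = h (jw (inverse c * v))" for h
    unfolding eta_inv_def shiftpt_jw zj c_def ..
  have Hm: "H m (Suc t) y = AW_D q g (jw v)"
    unfolding H_def eta_pow_jw v_def g_def AW_D_pow_def by simp
  also have "\<dots> = (g (jw (c * v)) - g (jw (inverse c * v))) / den c v"
    unfolding AW_D_def Let_def using ne1 ne2 by (simp add: e1 e2 den_def)
  finally have *: "H m (Suc t) y = (g (jw (c * v)) - g (jw (inverse c * v))) / den c v" .
  have dn: "den c v \<noteq> 0" by (rule den_nz[OF c_nz c_lt1 v1])
  have p1: "c powi (m + 1) * zpar y = c * v" unfolding v_def using c_nz
    by (simp add: power_int_add)
  have p2: "c powi (m - 1) * zpar y = inverse c * v" unfolding v_def using c_nz
    by (simp add: power_int_diff field_simps)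
  have "H (m + 1) t y = g (jw (c * v))" unfolding H_def eta_pow_jw g_def p1 ..
  moreover have "H (m - 1) t y = g (jw (inverse c * v))" unfolding H_def eta_pow_jw g_def p2 ..
  ultimately show ?thesis using * dn unfolding v_def[symmetric] by simp
qed

lemma Lt_lt: "t < M \<Longrightarrow> Lt t y = (H (int (M - t)) t y + H (- int (M - t)) t y) / 2"
  unfolding Lt_def AW_A_def H_def by simp

lemma Lt_M: "Lt M y = H 0 M y"
  unfolding Lt_def AW_A_def H_def eta_pow_jw by (simp add: jw_zpar)

lemma Rj_eq: assumes y: "R < norm y" and j: "j \<le> M"
  shows "Rj j y = H (int M - 2 * int j) 0 y"
proof (cases "2 * j \<le> M")
  case True
  hence e: "int M - 2 * int j = int (M - 2 * j)" by simp
  show ?thesis unfolding Rj_def H_def e using R_iter y by (simp add: AW_D_pow_def)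
next
  case False
  hence e: "int M - 2 * int j = - int (2 * j - M)" by simp
  have "eta_iter q (- int (2 * j - M)) f y = eta_pow q (- int (2 * j - M)) f y"
    using R_iter y j by auto
  thus ?thesis unfolding Rj_def H_def e by (simp add: AW_D_pow_def)
qed

lemma evN: "eventually (\<lambda>y. R < norm y) (at x)"
proof -
  have "open {y::complex. R < norm y}" by (intro open_Collect_less continuous_intros)
  thus ?thesis using eventually_at_in_open'[of "{y::complex. R < norm y}" x] x by simp
qed

definition inspan :: "(nat \<Rightarrow> complex \<Rightarrow> complex) \<Rightarrow> (complex \<Rightarrow> complex) \<Rightarrow> bool" where
  "inspan B h \<longleftrightarrow> (\<exists>a. (\<forall>i\<le>M. a i analytic_on {x}) \<and>
      eventually (\<lambda>y. h y = (\<Sum>i\<le>M. a i y * B i y)) (at x))"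

lemma inspan_base: assumes "i \<le> M" shows "inspan B (B i)"
  unfolding inspan_def
proof (intro exI conjI allI impI)
  show "(\<lambda>_. if j = i then 1 else 0) analytic_on {x}" for j by auto
  show "\<forall>\<^sub>F y in at x. B i y = (\<Sum>j\<le>M. (if j = i then 1 else 0) * B j y)"
  proof (intro always_eventually allI)
    fix y
    have "(\<Sum>j\<le>M. (if j = i then 1 else 0) * B j y) = (\<Sum>j\<le>M. if j = i then B j y else 0)"
      by (rule sum.cong) auto
    also have "\<dots> = B i y" using assms by (simp add: sum.delta)
    finally show "B i y = (\<Sum>j\<le>M. (if j = i then 1 else 0) * B j y)" by simp
  qed
qed

lemma inspan_zero: "inspan B (\<lambda>_. 0)"
  unfolding inspan_def by (intro exI[of _ "\<lambda>_ _. 0"]) auto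

lemma inspan_cong: assumes "inspan B h" "eventually (\<lambda>y. h y = h' y) (at x)" shows "inspan B h'"
proof -
  obtain a where a: "\<forall>i\<le>M. a i analytic_on {x}" "eventually (\<lambda>y. h y = (\<Sum>i\<le>M. a i y * B i y)) (at x)"
    using assms(1) unfolding inspan_def by blast
  have "eventually (\<lambda>y. h' y = (\<Sum>i\<le>M. a i y * B i y)) (at x)"
    using a(2) assms(2) by eventually_elim simp
  thus ?thesis using a(1) unfolding inspan_def by blast
qed

lemma inspan_add: assumes "inspan B h1" "inspan B h2" shows "inspan B (\<lambda>y. h1 y + h2 y)"
proof -
  obtain a1 where a1: "\<forall>i\<le>M. a1 i analytic_on {x}" "eventually (\<lambda>y. h1 y = (\<Sum>i\<le>M. a1 i y * B i y)) (at x)"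
    using assms(1) unfolding inspan_def by blast
  obtain a2 where a2: "\<forall>i\<le>M. a2 i analytic_on {x}" "eventually (\<lambda>y. h2 y = (\<Sum>i\<le>M. a2 i y * B i y)) (at x)"
    using assms(2) unfolding inspan_def by blast
  show ?thesis unfolding inspan_def
  proof (intro exI[of _ "\<lambda>i y. a1 i y + a2 i y"] conjI allI impI)
    show "(\<lambda>y. a1 i y + a2 i y) analytic_on {x}" if "i \<le> M" for i
      using a1(1) a2(1) that by (auto intro: analytic_intros)
    show "\<forall>\<^sub>F y in at x. h1 y + h2 y = (\<Sum>i\<le>M. (a1 i y + a2 i y) * B i y)"
      using a1(2) a2(2) by eventually_elim (simp add: distrib_right sum.distrib)
  qed
qed

lemma inspan_scale: assumes "b analytic_on {x}" "inspan B h" shows "inspan B (\<lambda>y. b y * h y)"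
proof -
  obtain a1 where a1: "\<forall>i\<le>M. a1 i analytic_on {x}" "eventually (\<lambda>y. h y = (\<Sum>i\<le>M. a1 i y * B i y)) (at x)"
    using assms(2) unfolding inspan_def by blast
  show ?thesis unfolding inspan_def
  proof (intro exI[of _ "\<lambda>i y. b y * a1 i y"] conjI allI impI)
    show "(\<lambda>y. b y * a1 i y) analytic_on {x}" if "i \<le> M" for i
      using a1(1) assms(1) that by (auto intro: analytic_intros)
    show "\<forall>\<^sub>F y in at x. b y * h y = (\<Sum>i\<le>M. (b y * a1 i y) * B i y)"
      using a1(2) by eventually_elim (simp add: sum_distrib_left mult.assoc)
  qed
qed

lemma inspan_diff: assumes "inspan B h1" "inspan B h2" shows "inspan B (\<lambda>y. h1 y - h2 y)"
proof -
  have "inspan B (\<lambda>y. (\<lambda>_. -1) y * h2 y)" by (rule inspan_scale[OF _ assms(2)]) auto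
  hence "inspan B (\<lambda>y. h1 y + (\<lambda>_. -1) y * h2 y)" by (rule inspan_add[OF assms(1)])
  thus ?thesis by (rule inspan_cong) auto
qed

lemma zpar_x: "1 < norm (zpar x)"
  using region2[OF x, of 0] M1 by simp

lemma zpar_an: "zpar analytic_on {x}" by (rule zpar_analytic[OF zpar_x])

lemma den_an:
  assumes "\<bar>m\<bar> \<le> int M - 1"
  shows "(\<lambda>y. den c (c powi m * zpar y)) analytic_on {x}"
    and "(\<lambda>y. inverse (den c (c powi m * zpar y))) analytic_on {x}"
proof -
  have cz: "c powi m * zpar x \<noteq> 0" using c_nz zpar_nz by simp
  note za = analytic_on_compose_gen[OF zpar_an, unfolded o_def]
  show an: "(\<lambda>y. den c (c powi m * zpar y)) analytic_on {x}"
    unfolding den_def jw_def using c_nz zpar_nz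
    by (intro analytic_intros zpar_an) auto
  have "den c (c powi m * zpar x) \<noteq> 0"
    by (rule den_nz[OF c_nz c_lt1 region2[OF x assms]])
  thus "(\<lambda>y. inverse (den c (c powi m * zpar y))) analytic_on {x}"
    by (intro analytic_intros an) auto
qed

end



context L2 begin

lemma dirA: "t \<le> M \<Longrightarrow> j \<le> M - t \<Longrightarrow> inspan Rj (H (int (M - t) - 2 * int j) t)"
proof (induction t arbitrary: j)
  case 0
  have "inspan Rj (Rj j)" by (rule inspan_base) (use 0 in simp)
  moreover have "eventually (\<lambda>y. Rj j y = H (int (M - 0) - 2 * int j) 0 y) (at x)"
    using evN by eventually_elim (use 0 Rj_eq in simp)
  ultimately show ?case by (rule inspan_cong)
next
  case (Suc t)
  define m where "m = int (M - Suc t) - 2 * int j"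
  have m1: "m + 1 = int (M - t) - 2 * int j" unfolding m_def using Suc.prems by simp
  have m2: "m - 1 = int (M - t) - 2 * int (Suc j)" unfolding m_def using Suc.prems by simp
  have mb: "\<bar>m\<bar> \<le> int M - 1" unfolding m_def using Suc.prems by simp
  have I1: "inspan Rj (H (m + 1) t)" unfolding m1 by (rule Suc.IH) (use Suc.prems in simp_all)
  have I2: "inspan Rj (H (m - 1) t)" unfolding m2 by (rule Suc.IH) (use Suc.prems in simp_all)
  have "inspan Rj (\<lambda>y. inverse (den c (c powi m * zpar y)) * (H (m + 1) t y - H (m - 1) t y))"
    by (intro inspan_scale den_an(2)[OF mb] inspan_diff I1 I2)
  moreover have "eventually (\<lambda>y. inverse (den c (c powi m * zpar y)) * (H (m + 1) t y - H (m - 1) t y)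
       = H m (Suc t) y) (at x)"
    using evN
  proof eventually_elim
    case (elim y)
    have r: "1 < norm (c powi m * zpar y)" by (rule region2[OF elim mb])
    have "den c (c powi m * zpar y) \<noteq> 0" by (rule den_nz[OF c_nz c_lt1 r])
    thus ?case using H_Suc[OF r, of t] by (simp add: field_simps)
  qed
  ultimately show ?case unfolding m_def by (rule inspan_cong)
qed

lemma LA: assumes "t \<le> M" shows "inspan Rj (Lt t)"
proof (cases "t = M")
  case True
  have "inspan Rj (H (int (M - M) - 2 * int 0) M)" by (rule dirA) auto
  thus ?thesis unfolding True by (rule inspan_cong) (simp add: Lt_M)
next
  case False
  hence t: "t < M" using assms by simp
  have A1: "inspan Rj (H (int (M - t) - 2 * int 0) t)" by (rule dirA) (use t in auto)
  have A2: "inspan Rj (H (int (M - t) - 2 * int (M - t)) t)" by (rule dirA) (use t in auto)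
  have "inspan Rj (\<lambda>y. (\<lambda>_. 1/2) y * (H (int (M - t) - 2 * int 0) t y + H (int (M - t) - 2 * int (M - t)) t y))"
    by (intro inspan_scale inspan_add A1 A2) auto
  thus ?thesis by (rule inspan_cong) (simp add: Lt_lt[OF t])
qed

lemma dirB: "d \<le> M \<Longrightarrow> j \<le> d \<Longrightarrow> inspan Lt (H (int d - 2 * int j) (M - d))"
proof (induction d arbitrary: j)
  case 0
  have "inspan Lt (Lt M)" by (rule inspan_base) simp
  thus ?case using 0 by (rule_tac inspan_cong) (auto simp: Lt_M)
next
  case (Suc d)
  note oIH = Suc.IH and oP = Suc.prems
  define t where "t = M - Suc d"
  have tS: "Suc t = M - d" unfolding t_def using Suc.prems by simp
  have tM: "t < M" unfolding t_def using Suc.prems by simp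
  define G where "G i y = H (int (Suc d)) t y - H (int (Suc d) - 2 * int i) t y" for i y
  have G: "inspan Lt (G i)" if "i \<le> Suc d" for i
    using that
  proof (induction i)
    case 0 show ?case by (rule inspan_cong[OF inspan_zero]) (simp add: G_def)
  next
    case (Suc i)
    define m where "m = int d - 2 * int i"
    have m1: "m + 1 = int (Suc d) - 2 * int i" unfolding m_def by simp
    have m2: "m - 1 = int (Suc d) - 2 * int (Suc i)" unfolding m_def by simp
    have mb: "\<bar>m\<bar> \<le> int M - 1" unfolding m_def using Suc.prems oP by simp
    have IH: "inspan Lt (H m (Suc t))" unfolding m_def tS
      by (rule oIH) (use Suc.prems oP in simp_all)
    have "inspan Lt (\<lambda>y. G i y + den c (c powi m * zpar y) * H m (Suc t) y)"
      by (intro inspan_add Suc.IH inspan_scale den_an(1)[OF mb] IH) (use Suc.prems in simp)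
    moreover have "eventually (\<lambda>y. G i y + den c (c powi m * zpar y) * H m (Suc t) y = G (Suc i) y) (at x)"
      using evN
    proof eventually_elim
      case (elim y)
      have r: "1 < norm (c powi m * zpar y)" by (rule region2[OF elim mb])
      have e: "den c (c powi m * zpar y) * H m (Suc t) y = H (m + 1) t y - H (m - 1) t y"
        using H_Suc[OF r, of t] by (simp only: mult.commute)
      have e': "den c (c powi m * zpar y) * H m (Suc t) y =
          H (int (Suc d) - 2 * int i) t y - H (int (Suc d) - 2 * int (Suc i)) t y"
        unfolding e m1 m2 ..
      show ?case by (simp only: G_def e') simp
    qed
    ultimately show ?case by (rule inspan_cong)
  qed
  have GS: "inspan Lt (G (Suc d))" by (rule G) simp
  have Lt_t: "inspan Lt (Lt t)" by (rule inspan_base) (use tM in simp)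
  have Htop: "inspan Lt (H (int (Suc d)) t)"
  proof -
    have "inspan Lt (\<lambda>y. Lt t y + (\<lambda>_. 1/2) y * G (Suc d) y)"
      by (intro inspan_add Lt_t inspan_scale GS) auto
    moreover have "\<forall>y. Lt t y + (\<lambda>_. 1/2) y * G (Suc d) y = H (int (Suc d)) t y"
    proof
      fix y
      have "int (M - t) = int (Suc d)" unfolding t_def using Suc.prems by simp
      moreover have "int (Suc d) - 2 * int (Suc d) = - int (Suc d)" by simp
      ultimately show "Lt t y + (\<lambda>_. 1/2) y * G (Suc d) y = H (int (Suc d)) t y"
        unfolding Lt_lt[OF tM] G_def by (simp only:) (simp add: field_simps)
    qed
    ultimately show ?thesis by (rule_tac inspan_cong) auto
  qed
  have S: "inspan Lt (\<lambda>y. H (int (Suc d)) t y - G j y)"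
    by (intro inspan_diff Htop G oP)
  have E: "H (int (Suc d)) t y - G j y = H (int (Suc d) - 2 * int j) (M - Suc d) y" for y
    unfolding G_def t_def by simp
  show ?case by (rule inspan_cong[OF S]) (intro always_eventually allI E)
qed

lemma RB: assumes "j \<le> M" shows "inspan Lt (Rj j)"
proof -
  have "inspan Lt (H (int M - 2 * int j) (M - M))" by (rule dirB) (use assms in auto)
  moreover have "eventually (\<lambda>y. H (int M - 2 * int j) (M - M) y = Rj j y) (at x)"
    using evN by eventually_elim (use assms Rj_eq in simp)
  ultimately show ?thesis by (rule inspan_cong)
qed

lemma Rj_mero: assumes "j \<le> M" shows "Rj j meromorphic_on {x}"
proof -
  define k where "k = int M - 2 * int j"
  have "(\<lambda>y. f (jw (c powi k * zpar y))) meromorphic_on {x}"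
  proof (rule meromorphic_on_compose[OF f _ subset_UNIV])
    show "(\<lambda>y. jw (c powi k * zpar y)) analytic_on {x}"
      unfolding jw_def using c_nz zpar_nz by (intro analytic_intros zpar_an) auto
  qed
  moreover have "eventually (\<lambda>y. f (jw (c powi k * zpar y)) = Rj j y) (at x)"
    using evN by eventually_elim (use assms in \<open>simp add: Rj_eq H_def eta_pow_jw AW_D_pow_def k_def\<close>)
  ultimately show ?thesis
    by (subst (asm) meromorphic_on_cong[where g="Rj j" and B="{x}"]) auto
qed

lemma inspan_mero:
  assumes "inspan B h" "\<And>i. i \<le> M \<Longrightarrow> B i meromorphic_on {x}"
  shows "h meromorphic_on {x}"
proof -
  obtain a where a: "\<forall>i\<le>M. a i analytic_on {x}" "eventually (\<lambda>y. h y = (\<Sum>i\<le>M. a i y * B i y)) (at x)"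
    using assms(1) unfolding inspan_def by blast
  have "(\<lambda>y. \<Sum>i\<le>M. a i y * B i y) meromorphic_on {x}"
    by (rule mero_sum) (use a assms(2) in auto)
  thus ?thesis
    by (subst (asm) meromorphic_on_cong[where g="h" and B="{x}"])
       (use a(2) in \<open>auto elim: eventually_mono\<close>)
qed

lemma inspan_nu0:
  assumes "inspan B h" "\<And>i. i \<le> M \<Longrightarrow> B i meromorphic_on {x}"
    "\<And>i. i \<le> M \<Longrightarrow> k \<le> nu0 (B i) x"
  shows "k \<le> nu0 h x"
proof -
  obtain a where a: "\<forall>i\<le>M. a i analytic_on {x}" "eventually (\<lambda>y. h y = (\<Sum>i\<le>M. a i y * B i y)) (at x)"
    using assms(1) unfolding inspan_def by blast
  show ?thesis by (rule span_nu0[of "{..M}" B x a h k]) (use a assms in auto)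
qed

lemma Lt_mero: "t \<le> M \<Longrightarrow> Lt t meromorphic_on {x}"
  using inspan_mero[OF LA Rj_mero] by blast

lemma main:
  "Min ((\<lambda>t. nu0 (Lt t) x) ` {0..M}) = Min ((\<lambda>t. nu0 (Rj t) x) ` {0..M})"
proof (rule antisym)
  show "Min ((\<lambda>t. nu0 (Rj t) x) ` {0..M}) \<le> Min ((\<lambda>t. nu0 (Lt t) x) ` {0..M})"
  proof (rule Min.boundedI)
    fix a assume "a \<in> (\<lambda>t. nu0 (Lt t) x) ` {0..M}"
    then obtain t where t: "t \<le> M" "a = nu0 (Lt t) x" by auto
    show "Min ((\<lambda>t. nu0 (Rj t) x) ` {0..M}) \<le> a" unfolding t(2)
      by (rule inspan_nu0[OF LA[OF t(1)] Rj_mero]) (auto intro: Min_le)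
  qed auto
  show "Min ((\<lambda>t. nu0 (Lt t) x) ` {0..M}) \<le> Min ((\<lambda>t. nu0 (Rj t) x) ` {0..M})"
  proof (rule Min.boundedI)
    fix a assume "a \<in> (\<lambda>t. nu0 (Rj t) x) ` {0..M}"
    then obtain t where t: "t \<le> M" "a = nu0 (Rj t) x" by auto
    show "Min ((\<lambda>t. nu0 (Lt t) x) ` {0..M}) \<le> a" unfolding t(2)
      by (rule inspan_nu0[OF RB[OF t(1)] Lt_mero]) (auto intro: Min_le)
  qed auto
qed

end

theorem lemma5p2:
  fixes q :: complex and M :: nat and R :: real and f :: "complex \<Rightarrow> complex"
  assumes q: "0 < norm q" "norm q < 1"
    and R_pos: "0 < R"
    and R_iter: "\<forall>g x k. R < norm x \<and> k \<le> M \<longrightarrow>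
                   eta_iter q (int k) g x = eta_pow q (int k) g x \<and>
                   eta_iter q (- int k) g x = eta_pow q (- int k) g x"
    and R_add: "\<forall>g x a b. R < norm x \<and> \<bar>a\<bar> \<le> int M \<and> \<bar>b\<bar> \<le> int M \<and> \<bar>a + b\<bar> \<le> int M \<longrightarrow>
                   eta_pow q a (eta_pow q b g) x = eta_pow q (a + b) g x"
    and f: "f meromorphic_on UNIV"
    and x: "R < norm x"
  shows "Min ((\<lambda>t. nu0 (AW_A q (M - t) (AW_D_pow q t f)) x) ` {0..M})
       = Min ((\<lambda>t. nu0 (eta_iter q (int M - 2 * int t) f) x) ` {0..M})"
proof (cases "M = 0")
  case True
  thus ?thesis by (simp add: AW_A_def AW_D_pow_def eta_iter_def)
next
  case False
  interpret L2 q M R f x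
    by unfold_locales (use assms False in auto)
  show ?thesis using main unfolding Lt_def Rj_def .
qed

end
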